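(* Let $\hat H(w)=e^{-w}$ and let $\alpha,\beta\in\mathbb{R}$ with $\alpha<2$, $\alpha-1<\beta<\alpha^2/4$, and $r_1:=\frac{\alpha-\sqrt{\alpha^2-4\beta}}{2}<-1$. Put $s=|\alpha-\sqrt{\alpha^2-4\beta}|=2|r_1|>2$. Then for $\tilde\tau>0$ and $\omega>0$, if $i\omega$ is a root of $\Phi$ then $\tan\omega>0$ and $\tilde\tau=\omega\tan\omega$; and the smallest $\tilde\tau>0$ for which $\Phi$ has a root on the imaginary axis is $$\tilde\tau_0=\omega_0\tan\omega_0=\arcsin\sqrt{\frac{2}{s}}\cdot\sqrt{\frac{2}{s-2}},\qquad \omega_0=\arcsin\sqrt{\frac{2}{s}},$$ at which $i\omega_0$ is a root.
   Context: For a delay-to-time-constant ratio $\tilde\tau>0$ and $\alpha,\beta\in\mathbb{R}$, the rescaled characteristic equation of the linearized coupled Wilson–Cowan system with kernel transform $\hat H$ is $$\Phi(w):=(w+\tilde\tau)^4-\alpha\,\tilde\tau^2(w+\tilde\tau)^2\hat H(w)^2+\beta\,\tilde\tau^4\hat H(w)^4=0,$$ equivalently $Q(w)^2-\alpha Q(w)+\beta=0$ with $Q(w)=\big(\frac{w+\tilde\tau}{\tilde\tau\hat H(w)}\big)^2$. For the Dirac (discrete) delay kernel, $\hat H(w)=e^{-w}$. *)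

theory Defs
  imports "HOL-Analysis.Analysis"
begin

definition Phi :: "(complex \<Rightarrow> complex) \<Rightarrow> real \<Rightarrow> real \<Rightarrow> real \<Rightarrow> complex \<Rightarrow> complex" where
  "Phi H alpha beta tau w =
     (w + of_real tau) ^ 4
     - of_real alpha * of_real tau ^ 2 * (w + of_real tau) ^ 2 * H w ^ 2
     + of_real beta * of_real tau ^ 4 * H w ^ 4"

definition H_dirac :: "complex \<Rightarrow> complex" where
  "H_dirac w = exp (- w)"

end

theory Submission
  imports Defs
begin

lemma Phi_zero_iff:
  fixes alpha beta tau om :: real
  assumes D: "alpha^2 - 4*beta \<ge> 0"
  defines "r1 \<equiv> (alpha - sqrt (alpha^2 - 4*beta))/2"
    and "r2 \<equiv> (alpha + sqrt (alpha^2 - 4*beta))/2"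
    and "A \<equiv> tau * cos om - om * sin om"
    and "B \<equiv> tau * sin om + om * cos om"
  shows "Phi H_dirac alpha beta tau (\<i> * of_real om) = 0 \<longleftrightarrow>
     ((A^2 - B^2 = r1*tau^2 \<or> A^2 - B^2 = r2*tau^2) \<and> A*B = 0)"
proof -
  have sq: "sqrt (alpha^2 - 4*beta) ^ 2 = alpha^2 - 4*beta" using D by simp
  have sum: "r1 + r2 = alpha" unfolding r1_def r2_def by (simp add: field_simps)
  have prod: "r1 * r2 = beta" unfolding r1_def r2_def
    using sq by (simp add: field_simps power2_eq_square)
  define w where "w = \<i> * complex_of_real om"
  define E where "E = exp (- w)"
  define X where "X = w + complex_of_real tau"
  have fac: "Phi H_dirac alpha beta tau w =
     (X^2 - of_real r1 * of_real tau^2 * E^2) * (X^2 - of_real r2 * of_real tau^2 * E^2)"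
  proof -
    have a: "complex_of_real alpha = of_real r1 + of_real r2" using sum by (metis of_real_add)
    have b: "complex_of_real beta = of_real r1 * of_real r2" using prod by (metis of_real_mult)
    show ?thesis unfolding Phi_def H_dirac_def E_def[symmetric] X_def[symmetric] a b
      by (simp add: algebra_simps power2_eq_square power4_eq_xxxx)
  qed
  have Y: "X * exp w = Complex A B"
    by (simp add: complex_eq_iff X_def w_def A_def B_def Re_exp Im_exp algebra_simps)
  have EE: "E * exp w = 1" unfolding E_def by (simp add: exp_minus)
  have Enz: "E \<noteq> 0" unfolding E_def by simp
  have each: "X^2 - of_real r * of_real tau^2 * E^2 = 0 \<longleftrightarrow> A^2 - B^2 = r*tau^2 \<and> A*B = 0"
    for r :: real
  proof -
    have "X^2 - of_real r * of_real tau^2 * E^2 = E^2 * ((X * exp w)^2 - of_real (r*tau^2))"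
      using EE by (simp add: algebra_simps power2_eq_square)
    also have "\<dots> = E^2 * ((Complex A B)^2 - of_real (r*tau^2))" using Y by simp
    finally have "X^2 - of_real r * of_real tau^2 * E^2 = 0 \<longleftrightarrow> (Complex A B)^2 = of_real (r*tau^2)"
      using Enz by simp
    also have "\<dots> \<longleftrightarrow> A^2 - B^2 = r*tau^2 \<and> A*B = 0"
      by (simp add: complex_eq_iff power2_eq_square)
    finally show ?thesis .
  qed
  show ?thesis unfolding w_def[symmetric] fac using each[of r1] each[of r2] by auto
qed

lemma AB_sq:
  fixes tau om :: real
  shows "(tau * cos om - om * sin om)^2 + (tau * sin om + om * cos om)^2 = tau^2 + om^2"
proof -
  have "(tau * cos om - om * sin om)^2 + (tau * sin om + om * cos om)^2
        = (tau^2 + om^2) * ((sin om)^2 + (cos om)^2)"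
    by algebra
  then show ?thesis by simp
qed


theorem mainTheorem8:
  fixes alpha beta :: real
  assumes "alpha < 2"
    and "alpha - 1 < beta" and "beta < alpha ^ 2 / 4"
    and "(alpha - sqrt (alpha ^ 2 - 4 * beta)) / 2 < -1"
  defines "s \<equiv> \<bar>alpha - sqrt (alpha ^ 2 - 4 * beta)\<bar>"
  defines "omega0 \<equiv> arcsin (sqrt (2 / s))"
  defines "tau0 \<equiv> arcsin (sqrt (2 / s)) * sqrt (2 / (s - 2))"
  shows "s > 2
    \<and> (\<forall>tau omega. tau > 0 \<longrightarrow> omega > 0 \<longrightarrow>
           Phi H_dirac alpha beta tau (\<i> * of_real omega) = 0 \<longrightarrow>
           tan omega > 0 \<and> tau = omega * tan omega)
    \<and> tau0 = omega0 * tan omega0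
    \<and> Phi H_dirac alpha beta tau0 (\<i> * of_real omega0) = 0
    \<and> tau0 > 0
    \<and> (\<forall>tau omega. 0 < tau \<longrightarrow> tau < tau0 \<longrightarrow>
           Phi H_dirac alpha beta tau (\<i> * of_real omega) \<noteq> 0)"
proof -
  define r1 where "r1 = (alpha - sqrt (alpha^2 - 4*beta))/2"
  define r2 where "r2 = (alpha + sqrt (alpha^2 - 4*beta))/2"
  have D: "alpha^2 - 4*beta \<ge> 0" using assms(3) by (simp add: field_simps)
  have sq: "sqrt (alpha^2 - 4*beta) ^ 2 = alpha^2 - 4*beta" using D by simp
  have sum: "r1 + r2 = alpha" unfolding r1_def r2_def by (simp add: field_simps)
  have prod: "r1 * r2 = beta" unfolding r1_def r2_def
    using sq by (simp add: field_simps power2_eq_square)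
  have r1lt: "r1 < -1" using assms(4) r1_def by simp
  have r12: "r1 \<le> r2" unfolding r1_def r2_def using D by simp
  have "(1 - r1) * (1 - r2) = 1 - alpha + beta" using sum prod by (simp add: algebra_simps)
  then have "(1 - r1) * (1 - r2) > 0" using assms(2) by simp
  then have r2lt: "r2 < 1" using r1lt by (smt (verit) mult_nonneg_nonneg mult_le_0_iff zero_less_mult_iff)
  have s_eq: "s = - 2 * r1" unfolding s_def r1_def using r1lt r1_def by simp
  have s2: "s > 2" using s_eq r1lt by simp
  note PZ = Phi_zero_iff[OF D, folded r1_def r2_def]
  have root: "tau * cos om = om * sin om \<and> (\<exists>r. -r * tau^2 = tau^2 + om^2 \<and> (r = r1 \<or> r = r2))"
    if tp: "tau > 0" and ph: "Phi H_dirac alpha beta tau (\<i> * of_real om) = 0"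
    for tau om :: real
  proof -
    define A where "A = tau * cos om - om * sin om"
    define B where "B = tau * sin om + om * cos om"
    have AB: "A^2 + B^2 = tau^2 + om^2" unfolding A_def B_def by (rule AB_sq)
    from ph[unfolded PZ, folded A_def B_def]
    obtain r where rr: "r = r1 \<or> r = r2" and e: "A^2 - B^2 = r * tau^2" and z: "A * B = 0"
      by blast
    have rl: "r < 1" using rr r1lt r2lt by auto
    have "B \<noteq> 0"
    proof
      assume "B = 0"
      then have "A^2 = r * tau^2" "A^2 = tau^2 + om^2" using e AB by auto
      then have "r * tau^2 \<ge> tau^2" by (metis le_add_same_cancel1 zero_le_power2)
      moreover have "tau^2 > 0" using tp by simp
      ultimately show False using rl by (smt (verit) mult_less_cancel_right2)
    qed
    then have A0: "A = 0" using z by simp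
    then have "-r * tau^2 = tau^2 + om^2" using e AB by simp
    then show ?thesis using A0 rr unfolding A_def by auto
  qed
  have part2: "\<forall>tau omega. tau > 0 \<longrightarrow> omega > 0 \<longrightarrow>
           Phi H_dirac alpha beta tau (\<i> * of_real omega) = 0 \<longrightarrow>
           tan omega > 0 \<and> tau = omega * tan omega"
  proof (intro allI impI)
    fix tau om :: real
    assume tp: "tau > 0" and op: "om > 0" and ph: "Phi H_dirac alpha beta tau (\<i> * of_real om) = 0"
    have e: "tau * cos om = om * sin om" using root[OF tp ph] by blast
    have c0: "cos om \<noteq> 0"
    proof
      assume "cos om = 0"
      then have "sin om = 0" using e op by simp
      then show False using \<open>cos om = 0\<close> sin_cos_squared_add[of om] by simp
    qed
    have t: "tau = om * tan om" using e c0 by (simp add: tan_def field_simps)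
    have "tan om > 0" using t tp op by (simp add: zero_less_mult_iff)
    then show "tan om > 0 \<and> tau = om * tan om" using t by simp
  qed
  have s2': "2 / s < 1" "0 < 2 / s" using s2 by auto
  have sq_in: "-1 \<le> sqrt (2/s)" "sqrt (2/s) \<le> 1" using s2' by (auto intro: order_trans[OF _ real_sqrt_ge_zero])
  have sin0: "sin omega0 = sqrt (2/s)" unfolding omega0_def using sq_in by (rule sin_arcsin)
  have cos0: "cos omega0 = sqrt (1 - 2/s)" unfolding omega0_def using sq_in s2'
    by (simp add: cos_arcsin)
  have cpos: "cos omega0 > 0" using cos0 s2' by simp
  have tan0: "tan omega0 = sqrt (2 / (s - 2))"
  proof -
    have "tan omega0 = sqrt (2/s) / sqrt (1 - 2/s)" using sin0 cos0 by (simp add: tan_def)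
    also have "\<dots> = sqrt ((2/s) / (1 - 2/s))" by (simp only: real_sqrt_divide)
    also have "(2/s) / (1 - 2/s) = 2 / (s - 2)" using s2 by (simp add: field_simps)
    finally show ?thesis .
  qed
  have part3: "tau0 = omega0 * tan omega0" unfolding tau0_def using tan0 omega0_def by simp
  have w0pos: "omega0 > 0" unfolding omega0_def using s2' sq_in
    by (metis arcsin_0 arcsin_less_mono abs_of_nonneg real_sqrt_gt_zero abs_zero zero_le_one
        order_less_imp_le)
  have t0pos: "tau0 > 0" unfolding tau0_def using w0pos s2 omega0_def by simp
  have tau0sq: "tau0^2 = omega0^2 * (2 / (s - 2))"
    unfolding tau0_def omega0_def[symmetric] using s2 by (simp add: power_mult_distrib)
  have part4: "Phi H_dirac alpha beta tau0 (\<i> * of_real omega0) = 0"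
  proof -
    define A where "A = tau0 * cos omega0 - omega0 * sin omega0"
    define B where "B = tau0 * sin omega0 + omega0 * cos omega0"
    have AB: "A^2 + B^2 = tau0^2 + omega0^2" unfolding A_def B_def by (rule AB_sq)
    have A0: "A = 0" unfolding A_def part3 using cpos by (simp add: tan_def)
    have "tau0^2 + omega0^2 = (s/2) * tau0^2" unfolding tau0sq using s2
      by (simp add: field_simps)
    then have "A^2 - B^2 = r1 * tau0^2" using A0 AB s_eq by simp
    then show ?thesis unfolding PZ A_def[symmetric] B_def[symmetric] using A0 by simp
  qed
  have part6: "\<forall>tau omega. 0 < tau \<longrightarrow> tau < tau0 \<longrightarrow>
           Phi H_dirac alpha beta tau (\<i> * of_real omega) \<noteq> 0"
  proof (intro allI impI notI)
    fix tau om :: real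
    assume tp: "0 < tau" and tl: "tau < tau0" and ph: "Phi H_dirac alpha beta tau (\<i> * of_real om) = 0"
    obtain r where e: "tau * cos om = om * sin om" and e2: "-r * tau^2 = tau^2 + om^2"
      and rr: "r = r1 \<or> r = r2" using root[OF tp ph] by blast
    define R where "R = - r"
    have Rle: "R \<le> s/2" using rr r12 s_eq R_def by auto
    have tsq: "tau^2 > 0" using tp by simp
    have om0: "om \<noteq> 0"
    proof
      assume "om = 0"
      then show False using e tp by simp
    qed
    have omsq: "om^2 = (R - 1) * tau^2" using e2 R_def by (simp add: algebra_simps)
    have R1: "R > 1"
    proof -
      have "om^2 > 0" using om0 by simp
      then have "(R - 1) * tau^2 > 0" using omsq by simp
      then show ?thesis using tsq by (simp add: zero_less_mult_iff)
    qed
    have "tau^2 * (cos om)^2 = om^2 * (sin om)^2" using e by (metis power_mult_distrib)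
    then have "tau^2 * (cos om)^2 = tau^2 * ((R - 1) * (sin om)^2)" using omsq by simp
    then have "(cos om)^2 = (R - 1) * (sin om)^2" using tsq by simp
    then have "1 - (sin om)^2 = (R - 1) * (sin om)^2" by (simp add: cos_squared_eq)
    then have Rs: "R * (sin om)^2 = 1" by (simp add: algebra_simps)
    have "(sin om)^2 = 1 / R" using Rs R1 by (simp add: field_simps)
    also have "\<dots> \<ge> 2 / s" using Rle R1 s2 by (simp add: field_simps)
    finally have "(sin om)^2 \<ge> 2/s" .
    then have "sqrt (2/s) \<le> sqrt ((sin om)^2)" by (rule real_sqrt_le_mono)
    then have ss: "sqrt (2/s) \<le> \<bar>sin om\<bar>" by simp
    have w0le: "omega0 \<le> arcsin \<bar>sin om\<bar>" unfolding omega0_def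
      using ss sq_in abs_sin_le_one[of om] s2' by (subst arcsin_le_mono) auto
    have arcle: "arcsin \<bar>sin om\<bar> \<le> \<bar>om\<bar>"
    proof (cases "\<bar>om\<bar> \<le> pi/2")
      case True
      have "\<bar>sin om\<bar> = sin \<bar>om\<bar>"
      proof (cases "om \<ge> 0")
        case True
        then show ?thesis using \<open>\<bar>om\<bar> \<le> pi/2\<close> sin_ge_zero[of om] by simp
      next
        case False
        then have "sin (-om) \<ge> 0" using \<open>\<bar>om\<bar> \<le> pi/2\<close> sin_ge_zero[of "-om"] by simp
        then show ?thesis using False by simp
      qed
      then show ?thesis using True arcsin_sin[of "\<bar>om\<bar>"] by simp
    next
      case False
      have "arcsin \<bar>sin om\<bar> \<le> pi/2"
        by (rule arcsin_ubound) (use abs_sin_le_one[of om] in auto)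
      then show ?thesis using False by simp
    qed
    have womg: "omega0^2 \<le> om^2"
    proof -
      have "omega0 \<le> \<bar>om\<bar>" using w0le arcle by linarith
      then have "omega0^2 \<le> \<bar>om\<bar>^2" using w0pos by (intro power_mono) auto
      then show ?thesis by simp
    qed
    have "1 / (R - 1) \<ge> 2 / (s - 2)" using Rle R1 s2 by (simp add: field_simps)
    have tauq: "tau^2 = om^2 * (1 / (R - 1))" using omsq R1 by (simp add: field_simps)
    have "tau0^2 \<le> tau^2" unfolding tau0sq tauq
      using womg \<open>1 / (R - 1) \<ge> 2 / (s - 2)\<close> s2
      by (intro mult_mono) auto
    then have "tau0 \<le> tau" using tp t0pos by (simp add: power2_le_iff_abs_le)
    then show False using tl by simp
  qed
  show ?thesis using s2 part2 part3 part4 t0pos part6 by blast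
qed

end
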